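(* Let $D\ge1$, let $\sigma_1^2,\sigma_2^2>0$, $c'>0$, and for $k=1,\dots,D$ let $\alpha_k>0$, $\beta_k>0$, $q_k>0$ be fixed. Consider the problem in the variables $d_1,\dots,d_D\ge0$ and $0\le\varepsilon\le1$: $$\max\;\tilde f(\varepsilon,\{d_k\})=\frac{1-\varepsilon}{2}\sum_{k=1}^D\log_2\frac{\left(1+\frac{\alpha_k}{\sigma_1^2}q_k\right)\left(1+\frac{\beta_k}{\sigma_2^2}d_k\right)}{1+\frac{\alpha_k}{\sigma_1^2}q_k+\frac{\beta_k}{\sigma_2^2}d_k}\quad\text{s.t.}\quad \tilde g(\varepsilon,\{d_k\})=\varepsilon c'-\frac{1-\varepsilon}{2}\sum_{k=1}^D d_k\ge0.$$ For $\mu_1>0$ define $$d_k(\mu_1)=\frac{\sigma_2^2}{2\beta_k}\left(\sqrt{\left(\frac{q_k\alpha_k}{\sigma_1^2}\right)^2+\frac{4q_k\alpha_k\beta_k\mu_1}{\sigma_1^2\sigma_2^2\ln2}}-\frac{q_k\alpha_k}{\sigma_1^2}-2\right)^+$$ and $$\tilde l(\mu_1)=-\frac12\sum_{k=1}^D\log_2\frac{\left(1+\frac{\alpha_k}{\sigma_1^2}q_k\right)\left(1+\frac{\beta_k}{\sigma_2^2}d_k(\mu_1)\right)}{1+\frac{\alpha_k}{\sigma_1^2}q_k+\frac{\beta_k}{\sigma_2^2}d_k(\mu_1)}+\frac1{\mu_1}\left[c'+\frac12\sum_{k=1}^D d_k(\mu_1)\right].$$ Then there exists $\mu_1^*>0$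 with $\tilde l(\mu_1^* )=0$, and for any such $\mu_1^*$ the point $d_k^*=d_k(\mu_1^* )$, $$\varepsilon^*=\frac{\sum_{k=1}^D d_k^*}{2c'+\sum_{k=1}^D d_k^*},$$ is feasible with $\tilde g(\varepsilon^*,\{d_k^*\})=0$ and, with multiplier $\nu_1=1/\mu_1^*$ on $\tilde g\ge0$ and suitable multipliers $\lambda_k\ge0$ on $d_k\ge0$, satisfies the Karush–Kuhn–Tucker conditions of this problem.
   Context: This is the subproblem, with the source power allocation $q_k$ fixed, of the joint source/relay/TS-ratio design for an energy-harvesting MIMO relay: $\alpha_k,\beta_k$ are squared singular values of the source–relay and relay–destination channels, $d_k$ are transformed relay power variables, $\varepsilon$ is the time-switching ratio, and $c'=\eta(g_1P_0+\sigma_1^2D)>0$ is the harvested-energy constant ($\eta\in(0,1]$ conversion efficiency, $g_1$ largest squared singular value of the energy-phase channel, $P_0$ energy-phase transmit power). *)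

theory Defs
  imports Complex_Main
begin

(* Conventions: s1 = \<sigma>_1^2, s2 = \<sigma>_2^2 (noise variances), cc = c'.
   Indices k = 1..D of the paper are rendered as k = 0..D-1 (k < D);
   vectors are functions nat \<Rightarrow> real, only values at k < D matter.
   log 2 is the base-2 logarithm. *)

definition rate_term :: "real \<Rightarrow> real \<Rightarrow> real \<Rightarrow> real \<Rightarrow> real \<Rightarrow> real \<Rightarrow> real" where
  "rate_term s1 s2 a b qk dk =
     log 2 ((1 + a / s1 * qk) * (1 + b / s2 * dk) / (1 + a / s1 * qk + b / s2 * dk))"

definition ftil :: "nat \<Rightarrow> real \<Rightarrow> real \<Rightarrow> (nat \<Rightarrow> real) \<Rightarrow> (nat \<Rightarrow> real) \<Rightarrow> (nat \<Rightarrow> real)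
                    \<Rightarrow> real \<Rightarrow> (nat \<Rightarrow> real) \<Rightarrow> real" where
  "ftil D s1 s2 \<alpha> \<beta> q \<epsilon> d =
     (1 - \<epsilon>) / 2 * (\<Sum>k<D. rate_term s1 s2 (\<alpha> k) (\<beta> k) (q k) (d k))"

definition gtil :: "nat \<Rightarrow> real \<Rightarrow> real \<Rightarrow> (nat \<Rightarrow> real) \<Rightarrow> real" where
  "gtil D cc \<epsilon> d = \<epsilon> * cc - (1 - \<epsilon>) / 2 * (\<Sum>k<D. d k)"

definition dmu :: "real \<Rightarrow> real \<Rightarrow> (nat \<Rightarrow> real) \<Rightarrow> (nat \<Rightarrow> real) \<Rightarrow> (nat \<Rightarrow> real)
                   \<Rightarrow> real \<Rightarrow> nat \<Rightarrow> real" where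
  "dmu s1 s2 \<alpha> \<beta> q \<mu> k =
     s2 / (2 * \<beta> k) *
       max 0 (sqrt ((q k * \<alpha> k / s1)\<^sup>2 + 4 * q k * \<alpha> k * \<beta> k * \<mu> / (s1 * s2 * ln 2))
              - q k * \<alpha> k / s1 - 2)"

definition ltil :: "nat \<Rightarrow> real \<Rightarrow> real \<Rightarrow> real \<Rightarrow> (nat \<Rightarrow> real) \<Rightarrow> (nat \<Rightarrow> real) \<Rightarrow> (nat \<Rightarrow> real)
                    \<Rightarrow> real \<Rightarrow> real" where
  "ltil D s1 s2 cc \<alpha> \<beta> q \<mu> =
     - 1/2 * (\<Sum>k<D. rate_term s1 s2 (\<alpha> k) (\<beta> k) (q k) (dmu s1 s2 \<alpha> \<beta> q \<mu> k))
     + 1 / \<mu> * (cc + 1/2 * (\<Sum>k<D. dmu s1 s2 \<alpha> \<beta> q \<mu> k))"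

definition feasible :: "nat \<Rightarrow> real \<Rightarrow> real \<Rightarrow> (nat \<Rightarrow> real) \<Rightarrow> bool" where
  "feasible D cc \<epsilon> d \<longleftrightarrow> (\<forall>k<D. 0 \<le> d k) \<and> 0 \<le> \<epsilon> \<and> \<epsilon> \<le> 1 \<and> 0 \<le> gtil D cc \<epsilon> d"

(* KKT conditions for: maximize ftil subject to gtil \<ge> 0 (multiplier \<nu>),
   d_k \<ge> 0 (multipliers \<lambda>_k), \<epsilon> \<ge> 0 (multiplier \<tau>0), 1 - \<epsilon> \<ge> 0 (multiplier \<tau>1). *)
definition KKT_point :: "nat \<Rightarrow> real \<Rightarrow> real \<Rightarrow> real \<Rightarrow> (nat \<Rightarrow> real) \<Rightarrow> (nat \<Rightarrow> real) \<Rightarrow> (nat \<Rightarrow> real)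
                         \<Rightarrow> real \<Rightarrow> (nat \<Rightarrow> real) \<Rightarrow> real \<Rightarrow> (nat \<Rightarrow> real) \<Rightarrow> bool" where
  "KKT_point D s1 s2 cc \<alpha> \<beta> q \<epsilon> d \<nu> lam \<longleftrightarrow>
     feasible D cc \<epsilon> d \<and>
     0 \<le> \<nu> \<and> \<nu> * gtil D cc \<epsilon> d = 0 \<and>
     (\<forall>k<D. 0 \<le> lam k \<and> lam k * d k = 0) \<and>
     (\<exists>\<tau>0 \<tau>1. 0 \<le> \<tau>0 \<and> 0 \<le> \<tau>1 \<and> \<tau>0 * \<epsilon> = 0 \<and> \<tau>1 * (1 - \<epsilon>) = 0 \<and>
        (\<exists>Fe Ge. ((\<lambda>x. ftil D s1 s2 \<alpha> \<beta> q x d) has_real_derivative Fe) (at \<epsilon>) \<and>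
                 ((\<lambda>x. gtil D cc x d) has_real_derivative Ge) (at \<epsilon>) \<and>
                 Fe + \<nu> * Ge + \<tau>0 - \<tau>1 = 0)) \<and>
     (\<forall>k<D. \<exists>Fk Gk.
        ((\<lambda>x. ftil D s1 s2 \<alpha> \<beta> q \<epsilon> (d(k := x))) has_real_derivative Fk) (at (d k)) \<and>
        ((\<lambda>x. gtil D cc \<epsilon> (d(k := x))) has_real_derivative Gk) (at (d k)) \<and>
        Fk + \<nu> * Gk + lam k = 0)"

end

theory Submission
  imports Defs "HOL-Real_Asymp.Real_Asymp"
begin

lemma dform:
  assumes "s1 > 0" "s2 > 0" "\<beta> k > 0"
  shows "dmu s1 s2 \<alpha> \<beta> q \<mu> k = 1/(2*(\<beta> k/s2)) * max 0 (sqrt((\<alpha> k/s1*q k)^2 + 4*(\<alpha> k/s1*q k)*(\<beta> k/s2)*\<mu>/ln 2) - \<alpha> k/s1*q k - 2)"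
proof -
  have e1: "(q k * \<alpha> k / s1)\<^sup>2 + 4 * q k * \<alpha> k * \<beta> k * \<mu> / (s1 * s2 * ln 2) = (\<alpha> k/s1*q k)^2 + 4*(\<alpha> k/s1*q k)*(\<beta> k/s2)*\<mu>/ln 2"
    using assms by (simp add: field_simps)
  have e2: "q k * \<alpha> k / s1 = \<alpha> k/s1*q k" by simp
  have e3: "s2 / (2 * \<beta> k) = 1/(2*(\<beta> k/s2))" by simp
  show ?thesis unfolding dmu_def e1 unfolding e2 e3 by (rule refl)
qed

lemma dgen:
  fixes A B \<mu> :: real
  assumes "A > 0" "B > 0" "\<mu> > 0"
  defines "d \<equiv> 1/(2*B) * max 0 (sqrt(A^2 + 4*A*B*\<mu>/ln 2) - A - 2)"
  shows "d \<ge> 0" "(1+B*d)*(1+A+B*d) \<ge> A*B*\<mu>/ln 2"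
    "d > 0 \<Longrightarrow> (1+B*d)*(1+A+B*d) = A*B*\<mu>/ln 2"
    "A*B*\<mu>/ln 2 \<le> 1 + A \<Longrightarrow> d = 0"
proof -
  define S where "S = sqrt(A^2 + 4*A*B*\<mu>/ln 2)"
  have l2: "ln (2::real) > 0" by simp
  have "4*A*B*\<mu>/ln 2 \<ge> 0" using assms l2 by simp
  then have arg: "A^2 + 4*A*B*\<mu>/ln 2 \<ge> 0" by (metis add_nonneg_nonneg zero_le_power2)
  have Ssq: "S^2 = A^2 + 4*A*B*\<mu>/ln 2" unfolding S_def by (rule real_sqrt_pow2[OF arg])
  have S0: "S \<ge> 0" unfolding S_def using arg by simp
  have dS: "d = 1/(2*B) * max 0 (S - A - 2)" unfolding d_def S_def by simp
  show "d \<ge> 0" unfolding dS using assms by simp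
  show eq: "(1+B*d)*(1+A+B*d) = A*B*\<mu>/ln 2" if "d > 0"
  proof -
    have "S - A - 2 > 0"
    proof (rule ccontr)
      assume "\<not> S - A - 2 > 0"
      then have "d = 0" unfolding dS by simp
      with that show False by simp
    qed
    then have "B*d = (S - A - 2)/2" unfolding dS using assms by simp
    then have "S = 2*B*d + A + 2" by simp
    then have "(1+B*d)*(1+A+B*d) = (S^2 - A^2)/4" by (simp add: power2_eq_square algebra_simps)
    then show ?thesis using Ssq by simp
  qed
  show "(1+B*d)*(1+A+B*d) \<ge> A*B*\<mu>/ln 2"
  proof (cases "d > 0")
    case True then show ?thesis using eq by simp
  next
    case False
    then have d0: "d = 0" using \<open>d \<ge> 0\<close> by simp
    have "S - A - 2 \<le> 0"
    proof (rule ccontr)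
      assume "\<not> S - A - 2 \<le> 0"
      then have "d > 0" unfolding dS using assms by simp
      with d0 show False by simp
    qed
    then have "S^2 \<le> (A+2)^2" using S0 assms by (intro power_mono) auto
    then have "4*A*B*\<mu>/ln 2 \<le> 4*A + 4" using Ssq by (simp add: power2_eq_square algebra_simps)
    then show ?thesis using d0 by simp
  qed
  show "d = 0" if "A*B*\<mu>/ln 2 \<le> 1 + A"
  proof -
    define X where "X = A*B*\<mu>/ln 2"
    have "S^2 = A^2 + 4*X" unfolding X_def Ssq by simp
    moreover have "X \<le> 1 + A" using that X_def by simp
    ultimately have "S^2 \<le> A^2 + 4*(1+A)" by (simp add: algebra_simps)
    moreover have "(A+2)^2 = A^2+4*(1+A)" by (simp add: power2_eq_square algebra_simps)
    ultimately have "S^2 \<le> (A+2)^2" by simp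
    then have "S \<le> A + 2" using S0 assms by (meson abs_le_square_iff abs_of_nonneg order.trans le_add_same_cancel1 less_imp_le power2_le_imp_le zero_le_numeral add_nonneg_nonneg)
    then show ?thesis unfolding dS by simp
  qed
qed

lemma LA1: fixes A B :: real assumes "A > 0" "B > 0"
  shows "filterlim (\<lambda>m. 1/(2*B)*(sqrt(A^2 + 4*A*B*m/ln 2) - A - 2)) at_top at_top"
  using assms by real_asymp
lemma LA2: fixes A B :: real assumes "A > 0" "B > 0"
  shows "((\<lambda>m. 1/(2*B)*sqrt(A^2 + 4*A*B*m/ln 2)/m) \<longlongrightarrow> 0) at_top"
  using assms by real_asymp
lemma LA3: fixes A B :: real assumes "A > 0" "B > 0"
  shows "((\<lambda>y. log 2 ((1+A)*(1+B*y)/(1+A+B*y))) \<longlongrightarrow> log 2 (1+A)) at_top"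
proof -
  have "((\<lambda>y. (1+A)*(1+B*y)/(1+A+B*y)) \<longlongrightarrow> 1+A) at_top"
    using assms by real_asymp
  then show ?thesis using assms by (intro tendsto_log) auto
qed

lemma rate_deriv:
  fixes A B x :: real
  assumes "A \<ge> 0" "B > 0" "x \<ge> 0"
  shows "((\<lambda>x. log 2 ((1+A)*(1+B*x)/(1+A+B*x))) has_real_derivative
          (A*B/(ln 2*((1+B*x)*(1+A+B*x))))) (at x)"
proof -
  have p1: "1+B*x > 0" using assms by (simp add: add_pos_nonneg)
  have p2: "1+A+B*x > 0" using assms by (simp add: add_pos_nonneg)
  have q: "((\<lambda>x. (1+A)*(1+B*x)/(1+A+B*x)) has_real_derivative
      ((1+A)*B*(1+A+B*x) - (1+A)*(1+B*x)*B)/((1+A+B*x)*(1+A+B*x))) (at x)"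
    by (rule DERIV_divide[OF DERIV_cmult[OF DERIV_add[OF DERIV_const DERIV_cmult[OF DERIV_ident]]]
          DERIV_add[OF DERIV_const DERIV_cmult[OF DERIV_ident]], THEN DERIV_cong])
       (use p2 in auto)
  have pos: "(1+A)*(1+B*x)/(1+A+B*x) > 0" using p1 p2 assms by simp
  have "((\<lambda>x. log 2 ((1+A)*(1+B*x)/(1+A+B*x))) has_real_derivative
      1 / (ln 2 * ((1+A)*(1+B*x)/(1+A+B*x))) * (((1+A)*B*(1+A+B*x) - (1+A)*(1+B*x)*B)/((1+A+B*x)*(1+A+B*x)))) (at x)"
    by (rule DERIV_chain2[OF DERIV_log[OF pos] q])
  moreover have "1 / (ln 2 * ((1+A)*(1+B*x)/(1+A+B*x))) * (((1+A)*B*(1+A+B*x) - (1+A)*(1+B*x)*B)/((1+A+B*x)*(1+A+B*x)))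
      = A*B/(ln 2*((1+B*x)*(1+A+B*x)))"
  proof -
    have "((1+A)*B*(1+A+B*x) - (1+A)*(1+B*x)*B) = (1+A)*A*B" by (simp add: algebra_simps)
    moreover have "\<And>u w L c::real. u > 0 \<Longrightarrow> w > 0 \<Longrightarrow> L > 0 \<Longrightarrow> c > 0 \<Longrightarrow>
       1 / (L * (c*u/w)) * (c*A*B/(w*w)) = A*B/(L*(u*w))"
      by (simp add: field_simps)
    moreover have "1 + A > 0" using assms by simp
    ultimately show ?thesis using p1 p2 by simp
  qed
  ultimately show ?thesis by simp
qed

lemma sum_upd:
  fixes D :: nat
  assumes "k < D"
  shows "(\<Sum>j<D. g j ((d(k:=x)) j)) = g k x + (\<Sum>j\<in>{..<D}-{k}. g j (d j))"
proof -
  have "(\<Sum>j<D. g j ((d(k:=x)) j)) = g k ((d(k:=x)) k) + (\<Sum>j\<in>{..<D}-{k}. g j ((d(k:=x)) j))"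
    using assms by (subst sum.remove[of "{..<D}" k]) auto
  also have "(\<Sum>j\<in>{..<D}-{k}. g j ((d(k:=x)) j)) = (\<Sum>j\<in>{..<D}-{k}. g j (d j))"
    by (rule sum.cong) auto
  finally show ?thesis by simp
qed

theorem mainTheorem2:
  fixes D :: nat and s1 s2 cc :: real and \<alpha> \<beta> q :: "nat \<Rightarrow> real"
  assumes "D \<ge> 1" and "s1 > 0" and "s2 > 0" and "cc > 0"
    and "\<forall>k<D. \<alpha> k > 0 \<and> \<beta> k > 0 \<and> q k > 0"
  shows "(\<exists>\<mu>>0. ltil D s1 s2 cc \<alpha> \<beta> q \<mu> = 0) \<and>
         (\<forall>\<mu>. \<mu> > 0 \<and> ltil D s1 s2 cc \<alpha> \<beta> q \<mu> = 0 \<longrightarrow>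
            (let d = dmu s1 s2 \<alpha> \<beta> q \<mu>;
                 \<epsilon> = (\<Sum>k<D. d k) / (2 * cc + (\<Sum>k<D. d k))
             in feasible D cc \<epsilon> d \<and> gtil D cc \<epsilon> d = 0 \<and>
                (\<exists>lam. KKT_point D s1 s2 cc \<alpha> \<beta> q \<epsilon> d (1 / \<mu>) lam)))"
proof -
  define A where "A k = \<alpha> k/s1*q k" for k
  define B where "B k = \<beta> k/s2" for k
  define R where "R k x = log 2 ((1+A k)*(1+B k*x)/(1+A k+B k*x))" for k x
  define dm where "dm \<mu> k = dmu s1 s2 \<alpha> \<beta> q \<mu> k" for \<mu> k
  define L where "L \<mu> = ltil D s1 s2 cc \<alpha> \<beta> q \<mu>" for \<mu>
  have l2: "ln (2::real) > 0" by simp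
  have Apos: "A k > 0" and Bpos: "B k > 0" if "k < D" for k
    using assms(2,3,5) that unfolding A_def B_def by auto
  have Rdef: "rate_term s1 s2 (\<alpha> k) (\<beta> k) (q k) x = R k x" for k x
    unfolding rate_term_def R_def A_def B_def by simp
  have dmf: "dm \<mu> k = 1/(2*B k) * max 0 (sqrt((A k)^2 + 4*A k*B k*\<mu>/ln 2) - A k - 2)"
    if "k < D" for k \<mu>
    unfolding dm_def A_def B_def using dform[OF assms(2,3)] assms(5) that by auto
  have dnn: "dm \<mu> k \<ge> 0" and dge: "(1+B k*dm \<mu> k)*(1+A k+B k*dm \<mu> k) \<ge> A k*B k*\<mu>/ln 2"
    and deq: "dm \<mu> k > 0 \<Longrightarrow> (1+B k*dm \<mu> k)*(1+A k+B k*dm \<mu> k) = A k*B k*\<mu>/ln 2"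
    and dz: "A k*B k*\<mu>/ln 2 \<le> 1 + A k \<Longrightarrow> dm \<mu> k = 0"
    if "k < D" "\<mu> > 0" for k \<mu>
    using dgen[OF Apos[OF that(1)] Bpos[OF that(1)] that(2)] dmf[OF that(1), of \<mu>] by auto
  have Lform: "L \<mu> = - 1/2 * (\<Sum>k<D. R k (dm \<mu> k)) + 1/\<mu> * (cc + 1/2 * (\<Sum>k<D. dm \<mu> k))" for \<mu>
    unfolding L_def ltil_def Rdef dm_def by simp
  have Rd: "(R k has_real_derivative (A k*B k/(ln 2*((1+B k*x)*(1+A k+B k*x))))) (at x)"
    if "k < D" "x \<ge> 0" for k x
    unfolding R_def[abs_def] using rate_deriv[of "A k" "B k" x] Apos[OF that(1)] Bpos[OF that(1)] that(2)
    by simp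
  have R0: "R k 0 = 0" if "k < D" for k
    unfolding R_def using Apos[OF that] by simp

  have ex: "\<exists>\<mu>>0. L \<mu> = 0"
  proof -
    have ev1: "\<forall>\<^sub>F \<mu> in at_right 0. \<forall>k\<in>{..<D}. \<mu> \<in> {0<..<ln 2*(1+A k)/(A k*B k)}"
    proof (rule eventually_ball_finite)
      show "\<forall>k\<in>{..<D}. \<forall>\<^sub>F \<mu> in at_right 0. \<mu> \<in> {0<..<ln 2*(1+A k)/(A k*B k)}"
      proof
        fix k assume "k \<in> {..<D}"
        then have "ln 2*(1+A k)/(A k*B k) > 0" using Apos Bpos l2 by (simp add: add_pos_pos)
        then show "\<forall>\<^sub>F \<mu> in at_right 0. \<mu> \<in> {0<..<ln 2*(1+A k)/(A k*B k)}"
          by (rule eventually_at_right_real)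
      qed
    qed simp
    then obtain b where b: "b > 0" "\<forall>y>0. y < b \<longrightarrow> (\<forall>k\<in>{..<D}. y \<in> {0<..<ln 2*(1+A k)/(A k*B k)})"
      by (subst (asm) eventually_at_right[of 0 1]) auto
    define \<mu>0 where "\<mu>0 = b/2"
    have m0: "\<mu>0 > 0" "\<mu>0 < b" using b unfolding \<mu>0_def by auto
    have dz0: "dm \<mu>0 k = 0" if "k < D" for k
    proof (rule dz[OF that m0(1)])
      have "\<mu>0 < ln 2*(1+A k)/(A k*B k)" using b(2) m0 that by auto
      then have "\<mu>0 * (A k*B k) < ln 2*(1+A k)"
        using Apos[OF that] Bpos[OF that] by (simp add: pos_less_divide_eq)
      then show "A k*B k*\<mu>0/ln 2 \<le> 1 + A k" using l2 by (simp add: pos_divide_le_eq mult.commute mult.left_commute)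
    qed
    have L0: "L \<mu>0 > 0"
      unfolding Lform using dz0 R0 m0 assms(4) by simp
    have lim: "(L \<longlongrightarrow> - 1/2 * (\<Sum>k<D. log 2 (1 + A k))) at_top"
    proof -
      have Leq: "L = (\<lambda>\<mu>. - 1/2 * (\<Sum>k<D. R k (dm \<mu> k)) + (cc/\<mu> + 1/2 * (\<Sum>k<D. dm \<mu> k / \<mu>)))"
        unfolding Lform[abs_def] by (auto simp: sum_divide_distrib[symmetric] add_divide_distrib)
      have t1: "((\<lambda>\<mu>. R k (dm \<mu> k)) \<longlongrightarrow> log 2 (1 + A k)) at_top" if "k < D" for k
      proof -
        have "filterlim (\<lambda>\<mu>. dm \<mu> k) at_top at_top"
        proof (rule filterlim_at_top_mono[OF LA1[OF Apos[OF that] Bpos[OF that]]])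
          show "\<forall>\<^sub>F x in at_top. 1/(2*B k)*(sqrt((A k)^2 + 4*A k*B k*x/ln 2) - A k - 2) \<le> dm x k"
            unfolding dmf[OF that] using Bpos[OF that] by (intro always_eventually allI mult_left_mono) auto
        qed
        then show ?thesis unfolding R_def
          by (rule filterlim_compose[OF LA3[OF Apos[OF that] Bpos[OF that]]])
      qed
      have t2: "((\<lambda>\<mu>. dm \<mu> k / \<mu>) \<longlongrightarrow> 0) at_top" if "k < D" for k
      proof (rule tendsto_sandwich[OF _ _ tendsto_const LA2[OF Apos[OF that] Bpos[OF that]]])
        show "\<forall>\<^sub>F n in at_top. 0 \<le> dm n k / n"
          using eventually_gt_at_top[of 0] by eventually_elim (use dnn that in simp)
        show "\<forall>\<^sub>F n in at_top. dm n k / n \<le> 1/(2*B k)*sqrt((A k)^2 + 4*A k*B k*n/ln 2)/n"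
          using eventually_gt_at_top[of 0]
        proof eventually_elim
          case (elim n)
          have "4*A k*B k*n/ln 2 \<ge> 0" using Apos[OF that] Bpos[OF that] elim l2 by simp
          then have S0: "sqrt((A k)^2 + 4*A k*B k*n/ln 2) \<ge> 0" by simp
          have "max 0 (sqrt((A k)^2 + 4*A k*B k*n/ln 2) - A k - 2) \<le> sqrt((A k)^2 + 4*A k*B k*n/ln 2)"
            using S0 Apos[OF that] by simp
          then have "dm n k \<le> 1/(2*B k)*sqrt((A k)^2 + 4*A k*B k*n/ln 2)"
            unfolding dmf[OF that] using Bpos[OF that] by (intro mult_left_mono) auto
          then have "dm n k / n \<le> (1/(2*B k)*sqrt((A k)^2 + 4*A k*B k*n/ln 2)) / n"
            using elim by (intro divide_right_mono) auto
          then show ?case by simp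
        qed
      qed
      have "((\<lambda>\<mu>. - 1/2 * (\<Sum>k<D. R k (dm \<mu> k)) + (cc/\<mu> + 1/2 * (\<Sum>k<D. dm \<mu> k / \<mu>)))
             \<longlongrightarrow> - 1/2 * (\<Sum>k<D. log 2 (1 + A k)) + (0 + 1/2 * (\<Sum>k<D. 0))) at_top"
        by (intro tendsto_intros t1 t2 tendsto_divide_0[OF tendsto_const filterlim_at_top_imp_at_infinity[OF filterlim_ident]]) auto
      then show ?thesis unfolding Leq by simp
    qed
    have neg: "- 1/2 * (\<Sum>k<D. log 2 (1 + A k)) < 0"
    proof -
      have "(\<Sum>k<D. log 2 (1 + A k)) > 0"
      proof (rule sum_pos)
        show "finite {..<D}" by simp
        show "{..<D} \<noteq> {}" using assms(1) by (metis lessThan_empty_iff not_one_le_zero)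
        fix i assume "i \<in> {..<D}"
        then have "A i > 0" using Apos by simp
        then show "log 2 (1 + A i) > 0" by simp
      qed
      then show ?thesis by simp
    qed
    obtain N where N: "\<forall>n\<ge>N. L n < 0"
      using order_tendstoD(2)[OF lim neg] by (auto simp: eventually_at_top_linorder)
    define \<mu>1 where "\<mu>1 = max N (\<mu>0 + 1)"
    have L1: "L \<mu>1 < 0" using N unfolding \<mu>1_def by simp
    have le: "\<mu>0 \<le> \<mu>1" unfolding \<mu>1_def by simp
    have cont: "isCont L x" if "x > 0" for x
    proof -
      have cd: "isCont (\<lambda>\<mu>. dm \<mu> k) x" if "k < D" for k
        unfolding dmf[OF that] using l2 by (intro continuous_intros) auto
      have cr: "isCont (\<lambda>\<mu>. R k (dm \<mu> k)) x" if "k < D" for k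
        using cd[OF that] DERIV_isCont[OF Rd[OF that dnn[OF that \<open>x > 0\<close>]]] by (rule isCont_o2)
      show ?thesis unfolding Lform[abs_def] using that cd cr
        by (intro continuous_intros) auto
    qed
    have "continuous_on {\<mu>0..\<mu>1} L"
      using cont m0 by (intro continuous_at_imp_continuous_on) auto
    then obtain x where "x \<ge> \<mu>0" "x \<le> \<mu>1" "L x = 0"
      using IVT2'[of L \<mu>1 0 \<mu>0] L0 L1 le by auto
    then show ?thesis using m0 by (intro exI[of _ x]) auto
  qed

  have part2: "(let d = dmu s1 s2 \<alpha> \<beta> q \<mu>;
                 \<epsilon> = (\<Sum>k<D. d k) / (2 * cc + (\<Sum>k<D. d k))
             in feasible D cc \<epsilon> d \<and> gtil D cc \<epsilon> d = 0 \<and>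
                (\<exists>lam. KKT_point D s1 s2 cc \<alpha> \<beta> q \<epsilon> d (1 / \<mu>) lam))"
    if mu: "\<mu> > 0" and L0: "L \<mu> = 0" for \<mu>
  proof -
    define d where "d = dm \<mu>"
    have d_eq: "dmu s1 s2 \<alpha> \<beta> q \<mu> = d" unfolding d_def dm_def by auto
    define S where "S = (\<Sum>k<D. d k)"
    define \<epsilon> where "\<epsilon> = S / (2*cc + S)"
    have Snn: "S \<ge> 0" unfolding S_def d_def using dnn mu by (intro sum_nonneg) auto
    have den: "2*cc + S > 0" using Snn assms(4) by simp
    have e0: "\<epsilon> \<ge> 0" and e1: "\<epsilon> \<le> 1" unfolding \<epsilon>_def using Snn den assms(4) by auto
    have g0: "gtil D cc \<epsilon> d = 0"
      unfolding gtil_def S_def[symmetric] \<epsilon>_def using den by (simp add: field_simps)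
    have feas: "feasible D cc \<epsilon> d"
      unfolding feasible_def using e0 e1 g0 dnn mu unfolding d_def by auto
    define lam where "lam k = (1-\<epsilon>)/2 * (1/\<mu> - A k*B k/(ln 2*((1+B k*d k)*(1+A k+B k*d k))))" for k
    have lamprops: "0 \<le> lam k \<and> lam k * d k = 0" if k: "k < D" for k
    proof -
      define P where "P = (1+B k*d k)*(1+A k+B k*d k)"
      have Pge: "P \<ge> A k*B k*\<mu>/ln 2" unfolding P_def d_def using dge[OF k mu] .
      have ABpos: "A k*B k*\<mu>/ln 2 > 0" using Apos[OF k] Bpos[OF k] mu l2 by simp
      have "A k*B k/(ln 2*P) \<le> A k*B k/(ln 2*(A k*B k*\<mu>/ln 2))"
        using Pge ABpos Apos[OF k] Bpos[OF k] l2
        by (intro divide_left_mono mult_left_mono mult_pos_pos) auto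
      also have "\<dots> = 1/\<mu>" using Apos[OF k] Bpos[OF k] mu l2 by (simp add: field_simps)
      finally have le: "A k*B k/(ln 2*P) \<le> 1/\<mu>" .
      have "0 \<le> lam k" unfolding lam_def P_def[symmetric] using le e1 by simp
      moreover have "lam k * d k = 0"
      proof (cases "d k > 0")
        case True
        then have "P = A k*B k*\<mu>/ln 2" unfolding P_def d_def using deq[OF k mu] by (simp add: d_def)
        then have "A k*B k/(ln 2*P) = 1/\<mu>" using Apos[OF k] Bpos[OF k] mu l2 by (simp add: field_simps)
        then show ?thesis unfolding lam_def P_def[symmetric] by simp
      next
        case False
        then have "d k = 0" using dnn[OF k mu] unfolding d_def by simp
        then show ?thesis by simp
      qed
      ultimately show ?thesis by simp
    qed
    have Fe: "((\<lambda>x. ftil D s1 s2 \<alpha> \<beta> q x d) has_real_derivative (- 1/2 * (\<Sum>k<D. R k (d k)))) (at \<epsilon>)"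
    proof -
      have "(\<lambda>x. ftil D s1 s2 \<alpha> \<beta> q x d) = (\<lambda>x. (1 - x) / 2 * (\<Sum>k<D. R k (d k)))"
        unfolding ftil_def Rdef by simp
      moreover have "((\<lambda>x. (1 - x) / 2 * (\<Sum>k<D. R k (d k))) has_real_derivative (- 1/2 * (\<Sum>k<D. R k (d k)))) (at \<epsilon>)"
        by (auto intro!: derivative_eq_intros)
      ultimately show ?thesis by simp
    qed
    have Ge: "((\<lambda>x. gtil D cc x d) has_real_derivative (cc + 1/2 * S)) (at \<epsilon>)"
      unfolding gtil_def S_def[symmetric] by (auto intro!: derivative_eq_intros)
    have FeGe: "- 1/2 * (\<Sum>k<D. R k (d k)) + 1/\<mu> * (cc + 1/2 * S) + 0 - 0 = 0"
      using L0 unfolding Lform S_def d_def by simp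
    have dk: "\<exists>Fk Gk.
        ((\<lambda>x. ftil D s1 s2 \<alpha> \<beta> q \<epsilon> (d(k := x))) has_real_derivative Fk) (at (d k)) \<and>
        ((\<lambda>x. gtil D cc \<epsilon> (d(k := x))) has_real_derivative Gk) (at (d k)) \<and>
        Fk + 1/\<mu> * Gk + lam k = 0" if k: "k < D" for k
    proof -
      define C where "C = (\<Sum>j\<in>{..<D}-{k}. R j (d j))"
      define C2 where "C2 = (\<Sum>j\<in>{..<D}-{k}. d j)"
      have f_eq: "(\<lambda>x. ftil D s1 s2 \<alpha> \<beta> q \<epsilon> (d(k := x))) = (\<lambda>x. (1-\<epsilon>)/2 * (R k x + C))"
        unfolding ftil_def Rdef C_def using sum_upd[OF k, of R d] by simp
      have g_eq: "(\<lambda>x. gtil D cc \<epsilon> (d(k := x))) = (\<lambda>x. \<epsilon>*cc - (1-\<epsilon>)/2 * (x + C2))"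
        unfolding gtil_def C2_def using sum_upd[OF k, of "\<lambda>j y. y" d] by simp
      define R' where "R' = A k*B k/(ln 2*((1+B k*d k)*(1+A k+B k*d k)))"
      have dF: "((\<lambda>x. (1-\<epsilon>)/2 * (R k x + C)) has_real_derivative ((1-\<epsilon>)/2 * (R' + 0))) (at (d k))"
        unfolding R'_def
        by (intro DERIV_cmult DERIV_add Rd[OF k] DERIV_const) (use dnn[OF k mu] d_def in auto)
      have dG: "((\<lambda>x. \<epsilon>*cc - (1-\<epsilon>)/2 * (x + C2)) has_real_derivative (0 - (1-\<epsilon>)/2 * (1 + 0))) (at (d k))"
        by (intro DERIV_diff DERIV_cmult DERIV_add DERIV_ident DERIV_const)
      have "(1-\<epsilon>)/2 * (R' + 0) + 1/\<mu> * (0 - (1-\<epsilon>)/2 * (1 + 0)) + lam k = 0"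
        unfolding lam_def R'_def by (simp add: algebra_simps)
      then show ?thesis using dF dG f_eq g_eq by metis
    qed
    have "KKT_point D s1 s2 cc \<alpha> \<beta> q \<epsilon> d (1 / \<mu>) lam"
    proof -
      have "\<exists>Fe Ge. ((\<lambda>x. ftil D s1 s2 \<alpha> \<beta> q x d) has_real_derivative Fe) (at \<epsilon>) \<and>
                 ((\<lambda>x. gtil D cc x d) has_real_derivative Ge) (at \<epsilon>) \<and>
                 Fe + 1/\<mu> * Ge + 0 - 0 = 0"
        using Fe Ge FeGe by blast
      then have tau: "\<exists>\<tau>0 \<tau>1. 0 \<le> \<tau>0 \<and> 0 \<le> \<tau>1 \<and> \<tau>0 * \<epsilon> = 0 \<and> \<tau>1 * (1 - \<epsilon>) = 0 \<and>
        (\<exists>Fe Ge. ((\<lambda>x. ftil D s1 s2 \<alpha> \<beta> q x d) has_real_derivative Fe) (at \<epsilon>) \<and>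
                 ((\<lambda>x. gtil D cc x d) has_real_derivative Ge) (at \<epsilon>) \<and>
                 Fe + 1/\<mu> * Ge + \<tau>0 - \<tau>1 = 0)"
        by (intro exI[of _ 0]) simp
      have nu: "0 \<le> 1/\<mu>" "1/\<mu> * gtil D cc \<epsilon> d = 0" using mu g0 by auto
      show ?thesis unfolding KKT_point_def using feas nu lamprops dk tau by blast
    qed
    then show ?thesis unfolding Let_def d_eq S_def[symmetric] \<epsilon>_def[symmetric] using feas g0 by auto
  qed
  show ?thesis using ex part2 unfolding L_def by auto
qed

end
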